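(* Let $s_1,s_2\ge0$ be integers and let $B^{s_1,s_2}(r_1,r_2;p_1,p_2)$ be as defined in the context. For all integers $r_1\ge1$, $r_2\ge0$, $p_2\ge0$ and $0\le p_1\le r_1-1$ with $(r_1-1)-p_1\ge p_2-r_2$, $$B^{s_1,s_2}(r_1,r_2;p_1,p_2)=B^{s_1,s_2}(r_1-1,r_2;p_1-1,p_2)+B^{s_1,s_2}(r_1-1,r_2+1;p_1,p_2)+(2p_1+2s_1)\,B^{s_1,s_2}(r_1-1,r_2;p_1,p_2).$$ In particular, when $p_2=0$, $$B^{s_1,s_2}(r_1,r_2;p_1,0)=B^{s_1,s_2}(r_1-1,r_2;p_1-1,0)+(2p_1+2s_1+s_2)\,B^{s_1,s_2}(r_1-1,r_2;p_1,0),$$ and this holds in particular when $r_2=0$.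
   Context: $S(n,m)$ denotes the Stirling number of the second kind, with the conventions $S(0,0)=1$, $S(n,0)=0$ for $n\ge1$, and $S(n,m)=0$ whenever $m>n$ or $m<0$; also $0^0=1$ and $\binom{n}{i}=0$ unless $0\le i\le n$. For nonnegative integers $s_1,s_2,r_1,r_2$ and integers $p_1,p_2$ define $$B^{s_1,s_2}(r_1,r_2;p_1,p_2)=\sum_{i=0}^{r_1}\binom{r_1}{i}2^{\,i-p_1}S(i,p_1)\sum_{j=0}^{r_1-i}\binom{r_1-i}{j}(2s_1+s_2)^{r_1-i-j}\sum_{l=0}^{r_2}\binom{r_2}{l}s_2^{\,r_2-l}S(l+j,p_2)$$ (terms with $i<p_1$ vanish since $S(i,p_1)=0$). In the paper this number is written $B^{s_1,s_2}_{2r_1+r_2,\,2p_1+p_2}$. *)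

theory Defs
  imports Main "HOL-Combinatorics.Stirling" Complex_Main
begin

definition S2 :: "nat \<Rightarrow> int \<Rightarrow> nat" where
  "S2 n m = (if m < 0 then 0 else Stirling n (nat m))"

definition B :: "nat \<Rightarrow> nat \<Rightarrow> nat \<Rightarrow> nat \<Rightarrow> int \<Rightarrow> int \<Rightarrow> real" where
  "B s1 s2 r1 r2 p1 p2 =
    (\<Sum>i=0..r1. real (r1 choose i) * (2::real) powi (int i - p1) * real (S2 i p1) *
      (\<Sum>j=0..r1-i. real ((r1-i) choose j) * real (2*s1+s2) ^ (r1-i-j) *
        (\<Sum>l=0..r2. real (r2 choose l) * real s2 ^ (r2-l) * real (S2 (l+j) p2))))"

end

theory Submission
  imports Defs
begin

definition conv :: "nat \<Rightarrow> (nat \<Rightarrow> nat \<Rightarrow> real) \<Rightarrow> real" where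
  "conv N f = (\<Sum>i=0..N. real (N choose i) * f i (N - i))"

lemma conv_add: "conv N (\<lambda>i k. f i k + g i k) = conv N f + conv N g"
  by (simp add: conv_def algebra_simps sum.distrib)

lemma conv_scale: "conv N (\<lambda>i k. c * f i k) = c * conv N f"
  by (simp add: conv_def sum_distrib_left mult_ac)

lemma conv_diff: "conv N (\<lambda>i k. f i k - g i k) = conv N f - conv N g"
  by (simp add: conv_def algebra_simps sum_subtractf)

lemma conv_Suc:
  "conv (Suc N) f = conv N (\<lambda>i k. f i (Suc k)) + conv N (\<lambda>i k. f (Suc i) k)"
proof -
  have "conv (Suc N) f = (\<Sum>i\<le>Suc N. real (Suc N choose i) * f i (Suc N - i))"
    by (simp add: conv_def atLeast0AtMost)
  also have "\<dots> = f 0 (Suc N) + (\<Sum>i\<le>N. real (Suc N choose Suc i) * f (Suc i) (N - i))"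
    by (subst sum.atMost_Suc_shift) simp
  also have "(\<Sum>i\<le>N. real (Suc N choose Suc i) * f (Suc i) (N - i))
     = (\<Sum>i\<le>N. real (N choose Suc i) * f (Suc i) (N - i) + real (N choose i) * f (Suc i) (N - i))"
    by (rule sum.cong) (simp_all add: distrib_right)
  also have "\<dots> = (\<Sum>i\<le>N. real (N choose Suc i) * f (Suc i) (N - i))
       + (\<Sum>i\<le>N. real (N choose i) * f (Suc i) (N - i))"
    by (rule sum.distrib)
  also have "f 0 (Suc N) + ((\<Sum>i\<le>N. real (N choose Suc i) * f (Suc i) (N - i))
       + (\<Sum>i\<le>N. real (N choose i) * f (Suc i) (N - i)))
     = (f 0 (Suc N) + (\<Sum>i\<le>N. real (N choose Suc i) * f (Suc i) (N - i)))
       + (\<Sum>i\<le>N. real (N choose i) * f (Suc i) (N - i))"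
    by (rule add.assoc[symmetric])
  also have "f 0 (Suc N) + (\<Sum>i\<le>N. real (N choose Suc i) * f (Suc i) (N - i))
      = (\<Sum>i\<le>Suc N. real (N choose i) * f i (Suc N - i))"
    by (subst sum.atMost_Suc_shift) simp
  also have "(\<Sum>i\<le>Suc N. real (N choose i) * f i (Suc N - i)) = (\<Sum>i\<le>N. real (N choose i) * f i (Suc (N - i)))"
    by (simp add: Suc_diff_le)
  finally show ?thesis by (simp add: conv_def atLeast0AtMost)
qed

definition G :: "nat \<Rightarrow> int \<Rightarrow> nat \<Rightarrow> nat \<Rightarrow> real" where
  "G s2 p2 r2 j = conv r2 (\<lambda>l k. real s2 ^ k * real (S2 (l + j) p2))"

definition H :: "nat \<Rightarrow> nat \<Rightarrow> int \<Rightarrow> nat \<Rightarrow> nat \<Rightarrow> real" where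
  "H s1 s2 p2 r2 n = conv n (\<lambda>j k. real (2*s1+s2) ^ k * G s2 p2 r2 j)"

definition A :: "int \<Rightarrow> nat \<Rightarrow> real" where
  "A p i = (2::real) powi (int i - p) * real (S2 i p)"

lemma B_eq: "B s1 s2 r1 r2 p1 p2 = conv r1 (\<lambda>i k. A p1 i * H s1 s2 p2 r2 k)"
  unfolding B_def conv_def H_def G_def A_def
  by (rule sum.cong) (simp_all add: mult_ac)

lemma G_Suc: "G s2 p2 (Suc r2) j = real s2 * G s2 p2 r2 j + G s2 p2 r2 (Suc j)"
  unfolding G_def
  by (subst conv_Suc) (simp add: conv_scale[symmetric] mult_ac)

lemma H_Suc: "H s1 s2 p2 r2 (Suc n) = H s1 s2 p2 (Suc r2) n + 2 * real s1 * H s1 s2 p2 r2 n"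
proof -
  have "H s1 s2 p2 r2 (Suc n) = conv n (\<lambda>j k. real (2*s1+s2) * (real (2*s1+s2) ^ k * G s2 p2 r2 j))
     + conv n (\<lambda>j k. real (2*s1+s2) ^ k * G s2 p2 (Suc r2) j - real s2 * (real (2*s1+s2) ^ k * G s2 p2 r2 j))"
    unfolding H_def by (subst conv_Suc) (simp add: G_Suc algebra_simps)
  also have "\<dots> = H s1 s2 p2 (Suc r2) n + 2 * real s1 * H s1 s2 p2 r2 n"
    unfolding conv_scale conv_diff H_def[symmetric] by (simp add: algebra_simps)
  finally show ?thesis .
qed

lemma S2_Suc: "real (S2 (Suc i) p) = of_int p * real (S2 i p) + real (S2 i (p - 1))"
proof (cases "p \<ge> 1")
  case True
  then obtain k where k: "p - 1 = int k" using zero_le_imp_eq_int[of "p - 1"] by auto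
  then have k': "p = int k + 1" by simp
  have n: "nat p = Suc k" using k' by simp
  have n2: "nat (p - 1) = k" using k by simp
  have a1: "S2 (Suc i) p = Stirling (Suc i) (Suc k)" using True n by (simp add: S2_def)
  have a2: "S2 i p = Stirling i (Suc k)" using True n by (simp add: S2_def)
  have a3: "S2 i (p - 1) = Stirling i k" using True n2 by (simp add: S2_def)
  have a4: "(of_int p :: real) = real k + 1" using k' by simp
  show ?thesis unfolding a1 a2 a3 a4 by (simp add: algebra_simps)
next
  case False
  then show ?thesis by (cases "p = 0") (auto simp: S2_def)
qed

lemma A_Suc: "A p (Suc i) = 2 * of_int p * A p i + A (p - 1) i"
proof -
  have e0: "(2::real) powi ((int i - p) + 1) = 2 powi (int i - p) * 2"
    by (rule power_int_add_1) simp
  have e1: "(2::real) powi (int (Suc i) - p) = 2 * 2 powi (int i - p)"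
  proof -
    have "int (Suc i) - p = (int i - p) + 1" by simp
    then show ?thesis using e0 by (simp only:)
  qed
  have e2: "(2::real) powi (int i - (p - 1)) = 2 * 2 powi (int i - p)"
    using e0 by (simp add: algebra_simps)
  show ?thesis unfolding A_def e1 e2 S2_Suc by (simp add: algebra_simps)
qed

lemma main:
  "B s1 s2 (Suc N) r2 p1 p2 = B s1 s2 N r2 (p1-1) p2 + B s1 s2 N (r2+1) p1 p2
           + (2*of_int p1 + 2*real s1) * B s1 s2 N r2 p1 p2"
proof -
  have "B s1 s2 (Suc N) r2 p1 p2 =
    conv N (\<lambda>i k. A p1 i * H s1 s2 p2 (Suc r2) k + 2 * real s1 * (A p1 i * H s1 s2 p2 r2 k))
    + conv N (\<lambda>i k. 2 * of_int p1 * (A p1 i * H s1 s2 p2 r2 k) + A (p1 - 1) i * H s1 s2 p2 r2 k)"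
    unfolding B_eq by (subst conv_Suc) (simp add: H_Suc A_Suc algebra_simps)
  then show ?thesis unfolding conv_add conv_scale B_eq[symmetric] by (simp add: algebra_simps)
qed

lemma G0: "G s2 0 (Suc r2) j = real s2 * G s2 0 r2 j"
proof -
  have "G s2 0 r2 (Suc j) = 0" unfolding G_def conv_def by (simp add: S2_def)
  then show ?thesis by (simp add: G_Suc)
qed

lemma B0: "B s1 s2 N (Suc r2) p1 0 = real s2 * B s1 s2 N r2 p1 0"
proof -
  have "H s1 s2 0 (Suc r2) n = real s2 * H s1 s2 0 r2 n" for n
    unfolding H_def G0 conv_scale[symmetric] by (simp add: mult_ac)
  then show ?thesis unfolding B_eq conv_scale[symmetric] by (simp add: mult_ac)
qed

theorem lemma3p17:
  fixes s1 s2 r1 r2 :: nat and p1 p2 :: int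
  assumes "r1 \<ge> 1" and "p2 \<ge> 0" and "0 \<le> p1" and "p1 \<le> int r1 - 1"
    and "(int r1 - 1) - p1 \<ge> p2 - int r2"
  shows "(B s1 s2 r1 r2 p1 p2 =
           B s1 s2 (r1-1) r2 (p1-1) p2 + B s1 s2 (r1-1) (r2+1) p1 p2
           + (2*of_int p1 + 2*real s1) * B s1 s2 (r1-1) r2 p1 p2)
       \<and> (B s1 s2 r1 r2 p1 0 =
           B s1 s2 (r1-1) r2 (p1-1) 0
           + (2*of_int p1 + 2*real s1 + real s2) * B s1 s2 (r1-1) r2 p1 0)"
proof -
  obtain N where N: "r1 = Suc N" using assms(1) by (cases r1) auto
  show ?thesis using main[of s1 s2 N r2 p1 p2] main[of s1 s2 N r2 p1 0] B0[of s1 s2 N r2 p1]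
    by (simp add: N algebra_simps)
qed

end
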